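(* Let $\theta$ be an infinite cardinal, let $\mathbb{P}$ be a $\theta$-directed poset, and let $\mathbb{P}^\ast$ be a $(<\theta)$-cofinal subposet of $\mathbb{P}$. Let $(I,\le)$ be a partial order and let $\langle p_i : i \in I\rangle$ be a diagram in $\mathbb{P}$ (i.e. $i \le j$ in $I$ implies $p_i \le p_j$). If for all $i \in I$, $|\{j \in I \mid j < i\}| < \theta$, then there exist a cofinal subset $I_0 \subseteq I$ and a diagram $\langle q_i : i \in I_0\rangle$ in $\mathbb{P}^\ast$ (i.e. $i\le j$ in $I_0$ implies $q_i \le^\ast q_j$) such that $p_i \le q_i$ for all $i \in I_0$.
   Context: A poset $\mathbb{P}$ is $\theta$-directed if every subset of cardinality $<\theta$ has an upper bound. A subposet of a poset $(\mathbb{P},\le)$ is a poset $(\mathbb{P}^\ast,\le^\ast)$ with $\mathbb{P}^\ast \subseteq \mathbb{P}$ and $x \le^\ast y$ implying $x \le y$. For a cardinal $\kappa$, $\mathbb{P}^\ast$ is $\kappa$-cofinal in $\mathbb{P}$ if for every $p \in \mathbb{P}$ and every sequence $\langle p_i : i < \kappa\rangle$ of elements of $\mathbb{P}^\ast$ with $p_i \le p$ for all $i$, there is $q \in \mathbb{P}^\ast$ with $p \le q$ and $p_i \le^\ast q$ for all $i<\kappa$. $\mathbb{P}^\ast$ is $(<\theta)$-cofinal if it is $\kappa$-cofinal for every cardinal $\kappa < \theta$. *)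

theory Defs
  imports Main "HOL-Library.Equipollence"
begin

text \<open>Cardinals are represented by sets: the cardinal
theta is the cardinality of a set Theta, and "|S| < theta" is S \<prec> Theta.\<close>

definition poset_on :: "'a set \<Rightarrow> ('a \<Rightarrow> 'a \<Rightarrow> bool) \<Rightarrow> bool" where
  "poset_on A le \<longleftrightarrow>
     (\<forall>x\<in>A. le x x) \<and>
     (\<forall>x\<in>A. \<forall>y\<in>A. le x y \<and> le y x \<longrightarrow> x = y) \<and>
     (\<forall>x\<in>A. \<forall>y\<in>A. \<forall>z\<in>A. le x y \<and> le y z \<longrightarrow> le x z)"

definition directed_card :: "'c set \<Rightarrow> 'a set \<Rightarrow> ('a \<Rightarrow> 'a \<Rightarrow> bool) \<Rightarrow> bool" where
  "directed_card Theta P le \<longleftrightarrow>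
     (\<forall>S. S \<subseteq> P \<and> S \<prec> Theta \<longrightarrow> (\<exists>u\<in>P. \<forall>s\<in>S. le s u))"

definition subposet :: "'a set \<Rightarrow> ('a \<Rightarrow> 'a \<Rightarrow> bool) \<Rightarrow> 'a set \<Rightarrow> ('a \<Rightarrow> 'a \<Rightarrow> bool) \<Rightarrow> bool" where
  "subposet Ps les P le \<longleftrightarrow> poset_on Ps les \<and> Ps \<subseteq> P \<and>
     (\<forall>x\<in>Ps. \<forall>y\<in>Ps. les x y \<longrightarrow> le x y)"

text \<open>kappa-cofinality, with the cardinal kappa represented by an index set K:
sequences are families indexed by K.\<close>
definition kappa_cofinal ::
  "'k set \<Rightarrow> 'a set \<Rightarrow> ('a \<Rightarrow> 'a \<Rightarrow> bool) \<Rightarrow> 'a set \<Rightarrow> ('a \<Rightarrow> 'a \<Rightarrow> bool) \<Rightarrow> bool" where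
  "kappa_cofinal K Ps les P le \<longleftrightarrow>
     (\<forall>p\<in>P. \<forall>f. (\<forall>i\<in>K. f i \<in> Ps \<and> le (f i) p) \<longrightarrow>
        (\<exists>q\<in>Ps. le p q \<and> (\<forall>i\<in>K. les (f i) q)))"

text \<open>(<theta)-cofinal: kappa-cofinal for every cardinal kappa < theta; the cardinals
below theta are exactly the cardinalities of sets K \<subseteq> Theta with K \<prec> Theta.\<close>
definition less_cofinal ::
  "'c set \<Rightarrow> 'a set \<Rightarrow> ('a \<Rightarrow> 'a \<Rightarrow> bool) \<Rightarrow> 'a set \<Rightarrow> ('a \<Rightarrow> 'a \<Rightarrow> bool) \<Rightarrow> bool" where
  "less_cofinal Theta Ps les P le \<longleftrightarrow>
     (\<forall>K. K \<subseteq> Theta \<and> K \<prec> Theta \<longrightarrow> kappa_cofinal K Ps les P le)"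

definition diagram :: "'i set \<Rightarrow> ('i \<Rightarrow> 'i \<Rightarrow> bool) \<Rightarrow> 'a set \<Rightarrow> ('a \<Rightarrow> 'a \<Rightarrow> bool) \<Rightarrow> ('i \<Rightarrow> 'a) \<Rightarrow> bool" where
  "diagram I leI P le p \<longleftrightarrow> (\<forall>i\<in>I. p i \<in> P) \<and>
     (\<forall>i\<in>I. \<forall>j\<in>I. leI i j \<longrightarrow> le (p i) (p j))"

definition cofinal_subset :: "'i set \<Rightarrow> 'i set \<Rightarrow> ('i \<Rightarrow> 'i \<Rightarrow> bool) \<Rightarrow> bool" where
  "cofinal_subset I0 I leI \<longleftrightarrow> I0 \<subseteq> I \<and> (\<forall>i\<in>I. \<exists>j\<in>I0. leI i j)"

end

theory Submission
  imports Defs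
begin

lemma insert_lesspoll_inf:
  assumes "A \<prec> T" "infinite T"
  shows "insert x A \<prec> T"
proof (cases "finite A")
  case True
  then show ?thesis using assms finite_lesspoll_infinite by blast
next
  case False
  then have "insert x A \<approx> A" by (rule infinite_insert_eqpoll)
  then show ?thesis using assms eq_lesspoll_trans by blast
qed

theorem theorem3p5:
  fixes Theta :: "'c set"
    and P :: "'a set" and le :: "'a \<Rightarrow> 'a \<Rightarrow> bool"
    and Ps :: "'a set" and les :: "'a \<Rightarrow> 'a \<Rightarrow> bool"
    and I :: "'i set" and leI :: "'i \<Rightarrow> 'i \<Rightarrow> bool"
    and p :: "'i \<Rightarrow> 'a"
  assumes "infinite Theta"
    and "poset_on P le"
    and "directed_card Theta P le"
    and "subposet Ps les P le"
    and "less_cofinal Theta Ps les P le"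
    and "poset_on I leI"
    and "diagram I leI P le p"
    and "\<forall>i\<in>I. {j\<in>I. leI j i \<and> j \<noteq> i} \<prec> Theta"
  shows "\<exists>I0 q. cofinal_subset I0 I leI \<and> diagram I0 leI Ps les q \<and>
                (\<forall>i\<in>I0. le (p i) (q i))"
proof -
  note inf = assms(1)
  have Ptr: "\<And>x y z. x \<in> P \<Longrightarrow> y \<in> P \<Longrightarrow> z \<in> P \<Longrightarrow> le x y \<Longrightarrow> le y z \<Longrightarrow> le x z"
    using assms(2) unfolding poset_on_def by blast
  have Itr: "\<And>x y z. x \<in> I \<Longrightarrow> y \<in> I \<Longrightarrow> z \<in> I \<Longrightarrow> leI x y \<Longrightarrow> leI y z \<Longrightarrow> leI x z"
    using assms(6) unfolding poset_on_def by blast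
  have Psrefl: "\<And>x. x \<in> Ps \<Longrightarrow> les x x" and PsP: "Ps \<subseteq> P"
    using assms(4) unfolding subposet_def poset_on_def by blast+
  have pP: "\<And>i. i \<in> I \<Longrightarrow> p i \<in> P" using assms(7) unfolding diagram_def by blast
  obtain W where W: "well_order_on I W" using well_order_on by blast
  define R where "R = W - Id"
  have wfR: "wf R" using W unfolding R_def well_order_on_def by blast
  have tot: "\<And>x y. x \<in> I \<Longrightarrow> y \<in> I \<Longrightarrow> x \<noteq> y \<Longrightarrow> (x,y) \<in> W \<or> (y,x) \<in> W"
    using W unfolding well_order_on_def linear_order_on_def total_on_def by blast
  define Q where "Q = {y\<in>I. \<not>(\<exists>x\<in>I. (x,y) \<in> R \<and> leI y x)}"
  have QI: "Q \<subseteq> I" unfolding Q_def by blast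
  have cof: "\<exists>j\<in>Q. leI i j" if "i \<in> I" for i
  proof -
    have i0: "i \<in> {x\<in>I. leI i x}" using that assms(6) unfolding poset_on_def by blast
    obtain x where x: "x \<in> {x\<in>I. leI i x}" and min: "\<And>z. (z,x) \<in> R \<Longrightarrow> z \<notin> {x\<in>I. leI i x}"
      using wfE_min[OF wfR i0] by blast
    have "x \<in> Q" unfolding Q_def
    proof (safe)
      show "x \<in> I" using x by blast
      fix z assume "z \<in> I" "(z,x) \<in> R" "leI x z"
      then show False using min[of z] x Itr[of i x z] that by blast
    qed
    then show ?thesis using x by blast
  qed
  define D where "D y = {j\<in>Q. leI j y \<and> j \<noteq> y}" for y
  have DR: "(j,y) \<in> R" if "j \<in> D y" "y \<in> Q" for j y
  proof (rule ccontr)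
    assume "(j,y) \<notin> R"
    then have "(y,j) \<in> W" "y \<noteq> j" using that tot[of j y] QI unfolding R_def D_def by auto
    then show False using that unfolding D_def Q_def R_def by blast
  qed
  have Dsmall: "D y \<prec> Theta" if "y \<in> Q" for y
  proof -
    have "D y \<subseteq> {j\<in>I. leI j y \<and> j \<noteq> y}" unfolding D_def using QI by blast
    then show ?thesis using assms(8) that QI subset_imp_lepoll lesspoll_trans1 by blast
  qed
  define F where "F g y = (SOME z. z \<in> Ps \<and> le (p y) z \<and> (\<forall>j\<in>D y. les (g j) z))" for g y
  define q where "q = wfrec R F"
  have step: "\<exists>z. z \<in> Ps \<and> le (p y) z \<and> (\<forall>j\<in>D y. les (q j) z)"
    if y: "y \<in> Q" and IH: "\<And>j. j \<in> D y \<Longrightarrow> q j \<in> Ps" for y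
  proof -
    have Ds: "D y \<prec> Theta" using Dsmall y by blast
    then obtain f where f: "inj_on f (D y)" "f ` D y \<subseteq> Theta"
      unfolding lesspoll_def lepoll_def by blast
    define K where "K = f ` D y"
    have "K \<approx> D y" unfolding K_def eqpoll_def using f
      by (meson bij_betw_imageI bij_betw_inv_into)
    then have K: "K \<subseteq> Theta" "K \<prec> Theta" using Ds f eq_lesspoll_trans unfolding K_def by blast+
    have kc: "kappa_cofinal K Ps les P le" using assms(5) K unfolding less_cofinal_def by blast
    define S where "S = insert (p y) (q ` D y)"
    have "q ` D y \<prec> Theta" using Ds image_lepoll lesspoll_trans1 by blast
    then have "S \<prec> Theta" unfolding S_def by (rule insert_lesspoll_inf[OF _ inf])
    moreover have "S \<subseteq> P" unfolding S_def using IH PsP pP y QI by blast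
    ultimately obtain u where u: "u \<in> P" "\<forall>s\<in>S. le s u"
      using assms(3) unfolding directed_card_def by blast
    define g where "g = inv_into (D y) f"
    have gk: "g k \<in> D y" if "k \<in> K" for k using that unfolding g_def K_def
      by (simp add: inv_into_into)
    have hq: "\<forall>k\<in>K. q (g k) \<in> Ps \<and> le (q (g k)) u" using gk IH u unfolding S_def by blast
    have "\<exists>z\<in>Ps. le u z \<and> (\<forall>k\<in>K. les (q (g k)) z)"
      using kc[unfolded kappa_cofinal_def, rule_format, OF u(1), of "\<lambda>k. q (g k)"] hq by blast
    then obtain z where z: "z \<in> Ps" "le u z" "\<forall>k\<in>K. les (q (g k)) z" by blast
    have "\<forall>j\<in>D y. les (q j) z"
    proof
      fix j assume j: "j \<in> D y"
      then have "f j \<in> K" "g (f j) = j" unfolding K_def g_def using f(1) by auto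
      then show "les (q j) z" using z(3) by metis
    qed
    moreover have "le (p y) z" using Ptr[of "p y" u z] u z PsP pP y QI unfolding S_def by blast
    ultimately show ?thesis using z by blast
  qed
  have main: "y \<in> Q \<longrightarrow> q y \<in> Ps \<and> le (p y) (q y) \<and> (\<forall>j\<in>D y. les (q j) (q y))" for y
  proof (induction y rule: wf_induct[OF wfR])
    case (1 y)
    show ?case
    proof
      assume y: "y \<in> Q"
      have IH: "\<And>j. j \<in> D y \<Longrightarrow> q j \<in> Ps"
        using 1 DR y unfolding D_def by blast
      have cutq: "\<forall>j\<in>D y. cut q R y j = q j" using DR y cut_apply by metis
      have "q y = F (cut q R y) y" unfolding q_def by (rule wfrec[OF wfR])
      also have "\<dots> = F q y" unfolding F_def using cutq by simp
      finally have qy: "q y = F q y" .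
      show "q y \<in> Ps \<and> le (p y) (q y) \<and> (\<forall>j\<in>D y. les (q j) (q y))"
        unfolding qy F_def by (rule someI_ex[OF step[OF y IH]])
    qed
  qed
  show ?thesis
  proof (intro exI conjI)
    show "cofinal_subset Q I leI" unfolding cofinal_subset_def using QI cof by blast
    show "diagram Q leI Ps les q" unfolding diagram_def
    proof safe
      fix i assume "i \<in> Q" then show "q i \<in> Ps" using main by blast
    next
      fix i j assume ij: "i \<in> Q" "j \<in> Q" "leI i j"
      show "les (q i) (q j)"
      proof (cases "i = j")
        case True then show ?thesis using main Psrefl ij by blast
      next
        case False then have "i \<in> D j" unfolding D_def using ij by blast
        then show ?thesis using main ij by blast
      qed
    qed
    show "\<forall>i\<in>Q. le (p i) (q i)" using main by blast
  qed
qed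

end
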